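(* For every positive integer $n$, $$\Psi_{\mathbb{Z}_n}(x)=\sum_{d\mid n}\mu\!\left(\frac nd\right)\left((1+x^2)^{\lfloor\frac{d-1}{2}\rfloor}(1+x)^{\frac{1+(-1)^d}{2}}-1\right),$$ and hence $$\mathcal{E}(\mathbb{Z}_n)=\Psi_{\mathbb{Z}_n}(1)=\sum_{d\mid n}\mu\!\left(\frac nd\right)\left(2^{\lfloor d/2\rfloor}-1\right),$$ where $\mu$ is the number-theoretic Möbius function.
   Context: For a finite group $\mathcal{A}$ with identity $e$, let $G(\mathcal{A})=\{\Omega\subseteq\mathcal{A}:\Omega^{-1}=\Omega,\ \langle\Omega\rangle=\mathcal{A},\ e\notin\Omega\}$. For $k\ge1$ let $a_k(\mathcal{A})$ be the number of orbits of the inner automorphism group $\mathrm{Inn}(\mathcal{A})$ (acting by $\alpha\cdot\Omega=\alpha(\Omega)$) on $\{\Omega\in G(\mathcal{A}):|\Omega|=k\}$; $\Psi_{\mathcal{A}}(x)=\sum_{k=1}^{|\mathcal{A}|-1}a_k(\mathcal{A})x^k$ and $\mathcal{E}(\mathcal{A})=\Psi_{\mathcal{A}}(1)$. For the cyclic (abelian) group $\mathbb{Z}_n$, $\mathrm{Inn}$ is trivial, so $a_k(\mathbb{Z}_n)$ is the number of inverse-closed generating subsets of $\mathbb{Z}_n\setminus\{0\}$ of size $k$. *)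

theory Defs
  imports "HOL-Algebra.Elementary_Groups" "HOL-Algebra.Generated_Groups"
    "HOL-Computational_Algebra.Polynomial" "HOL-Computational_Algebra.Squarefree"
begin

definition moebius_mu :: "nat \<Rightarrow> int" where
  "moebius_mu m = (if m = 0 \<or> \<not> squarefree m then 0 else (-1) ^ card (prime_factors m))"

definition gen_inv_sets :: "('a, 'b) monoid_scheme \<Rightarrow> nat \<Rightarrow> 'a set set" where
  "gen_inv_sets G k = {\<Omega>. \<Omega> \<subseteq> carrier G \<and> m_inv G ` \<Omega> = \<Omega>
      \<and> generate G \<Omega> = carrier G \<and> \<one>\<^bsub>G\<^esub> \<notin> \<Omega> \<and> card \<Omega> = k}"

definition inn_rel :: "('a, 'b) monoid_scheme \<Rightarrow> 'a set set \<Rightarrow> ('a set \<times> 'a set) set" where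
  "inn_rel G S = {(\<Omega>, \<Omega>'). \<Omega> \<in> S \<and> \<Omega>' \<in> S \<and>
      (\<exists>g \<in> carrier G. \<Omega>' = (\<lambda>x. g \<otimes>\<^bsub>G\<^esub> x \<otimes>\<^bsub>G\<^esub> inv\<^bsub>G\<^esub> g) ` \<Omega>)}"

definition a_k :: "('a, 'b) monoid_scheme \<Rightarrow> nat \<Rightarrow> nat" where
  "a_k G k = card (gen_inv_sets G k // inn_rel G (gen_inv_sets G k))"

definition Psi :: "('a, 'b) monoid_scheme \<Rightarrow> int poly" where
  "Psi G = (\<Sum>k\<in>{1..card (carrier G) - 1}. monom (int (a_k G k)) k)"

definition E_count :: "('a, 'b) monoid_scheme \<Rightarrow> int" where
  "E_count G = poly (Psi G) 1"

end

theory Submission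
  imports Defs
begin


lemma mu_1: "moebius_mu 1 = 1"
  by (simp add: moebius_mu_def)

lemma mu_sq: "prime p \<Longrightarrow> p^2 dvd d \<Longrightarrow> moebius_mu d = 0"
  unfolding moebius_mu_def squarefree_def
  by (metis not_prime_unit)

lemma mu_mult_prime:
  assumes p: "prime p" and d: "d > 0" and nd: "\<not> p dvd d"
  shows "moebius_mu (p*d) = - moebius_mu d"
proof -
  have cop: "coprime p d" using p nd by (simp add: prime_imp_coprime)
  have sq: "squarefree (p*d) \<longleftrightarrow> squarefree d"
    using squarefree_mult_coprime[OF cop] squarefree_prime[OF p] 
    by (metis squarefree_mult_coprime cop mult.commute squarefree_multD(2))
  have pf: "prime_factors (p*d) = insert p (prime_factors d)"
    using prime_factors_product[of p d] p d by (auto simp: prime_prime_factors)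
  have "p \<notin> prime_factors d" using nd by auto
  hence "card (prime_factors (p*d)) = Suc (card (prime_factors d))"
    using pf by simp
  thus ?thesis using sq d p unfolding moebius_mu_def by (auto simp: prime_gt_0_nat)
qed

lemma mu_sum:
  assumes m: "m > (1::nat)"
  shows "(\<Sum>d | d dvd m. moebius_mu d) = 0"
proof -
  obtain p where p: "prime p" "p dvd m" using m prime_factor_nat[of m] by auto
  let ?D = "{d. d dvd m}"
  let ?Da = "{d. d dvd m \<and> \<not> p dvd d}"
  let ?Db = "{d. d dvd m \<and> p dvd d}"
  have fin: "finite ?D" using m by simp
  have eq: "?D = ?Da \<union> ?Db" by auto
  have split: "(\<Sum>d\<in>?D. moebius_mu d) = (\<Sum>d\<in>?Da. moebius_mu d) + (\<Sum>d\<in>?Db. moebius_mu d)"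
  proof -
    have f0: "finite ?Da" by (rule finite_subset[OF _ fin]) auto
    have f1: "finite ?Db" by (rule finite_subset[OF _ fin]) auto
    have di: "?Da \<inter> ?Db = {}" by auto
    show ?thesis unfolding eq by (rule sum.union_disjoint[OF f0 f1 di])
  qed
  have sub: "(*) p ` ?Da \<subseteq> ?Db"
  proof
    fix x assume "x \<in> (*) p ` ?Da"
    then obtain d where d: "d dvd m" "\<not> p dvd d" "x = p*d" by auto
    have "coprime p d" using p d by (simp add: prime_imp_coprime)
    hence "p*d dvd m" using d p by (simp add: divides_mult)
    thus "x \<in> ?Db" using d by auto
  qed
  have "(\<Sum>d\<in>?Db. moebius_mu d) = (\<Sum>d\<in>(*) p ` ?Da. moebius_mu d)"
  proof (rule sum.mono_neutral_right)
    show "finite ?Db" using fin by (auto intro: finite_subset)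
    show "(*) p ` ?Da \<subseteq> ?Db" by (rule sub)
    show "\<forall>i\<in>?Db - (*) p ` ?Da. moebius_mu i = 0"
    proof
      fix i assume i: "i \<in> ?Db - (*) p ` ?Da"
      then obtain j where j: "i = p*j" by auto
      have "j dvd m" using i j by (auto intro: dvd_mult_right)
      hence "p dvd j" using i j by auto
      hence "p^2 dvd i" using j by (simp add: power2_eq_square)
      thus "moebius_mu i = 0" using mu_sq p by blast
    qed
  qed
  also have "\<dots> = (\<Sum>d\<in>?Da. moebius_mu (p*d))"
    by (subst sum.reindex) (use p in \<open>auto simp: inj_on_def prime_gt_0_nat\<close>)
  also have "\<dots> = (\<Sum>d\<in>?Da. - moebius_mu d)"
  proof (rule sum.cong[OF refl])
    fix d assume "d \<in> ?Da"
    moreover hence "d > 0" using m by (auto intro: Nat.gr0I)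
    ultimately show "moebius_mu (p*d) = - moebius_mu d" using mu_mult_prime p by auto
  qed
  finally show ?thesis using split by (simp add: sum_negf)
qed

lemma mu_sum_gen:
  assumes "m > (0::nat)"
  shows "(\<Sum>d | d dvd m. moebius_mu d) = (if m = 1 then 1 else 0)"
  using mu_sum[of m] assms by (cases "m = 1") (auto simp: moebius_mu_def)


lemma divisor_reindex:
  assumes n: "n > (0::nat)" and e: "e dvd n"
  shows "(\<Sum>d | d dvd n \<and> e dvd d. moebius_mu (n div d)) = (\<Sum>j | j dvd n div e. moebius_mu j)"
proof (rule sum.reindex_bij_witness[where i = "\<lambda>b. n div b" and j = "\<lambda>d. n div d"])
  fix a assume a: "a \<in> {d. d dvd n \<and> e dvd d}"
  then obtain k l where k: "a = e*k" and l: "n = a*l" by (auto elim!: dvdE)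
  have a0: "a > 0" "l > 0" using n l by (auto intro: Nat.gr0I)
  have nd: "n div a = l" using l a0 by simp
  have e0: "e > 0" using a0 k by (auto intro: Nat.gr0I)
  have ne: "n div e = k*l" using l k e0 by (simp add: mult.assoc)
  show "n div (n div a) = a" using nd l a0 by simp
  show "n div a \<in> {j. j dvd n div e}" using nd ne by simp
  show "moebius_mu (n div a) = moebius_mu (n div a)" by simp
next
  fix b assume b: "b \<in> {j. j dvd n div e}"
  obtain k where k: "n = e*k" using e by (auto elim!: dvdE)
  have e0: "e > 0" "k > 0" using n k by (auto intro: Nat.gr0I)
  have ne: "n div e = k" using k e0 by simp
  then obtain c where c: "k = b*c" using b by (auto elim!: dvdE)
  have b0: "b > 0" using e0 c by (auto intro: Nat.gr0I)
  have nb: "n div b = e*c" using k c b0 by (simp add: ac_simps)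
  show "n div (n div b) = b" using nb k c e0 b0 by (simp add: ac_simps)
  show "n div b \<in> {d. d dvd n \<and> e dvd d}" using nb k c by (auto simp: ac_simps)
qed

lemma mobius_inversion:
  fixes f g :: "nat \<Rightarrow> 'a::comm_ring_1"
  assumes g: "\<And>m. m > 0 \<Longrightarrow> g m = (\<Sum>d | d dvd m. f d)" and n: "n > 0"
  shows "f n = (\<Sum>d | d dvd n. of_int (moebius_mu (n div d)) * g d)"
proof -
  let ?D = "{d. d dvd n}"
  have fin: "finite ?D" using n by simp
  have "(\<Sum>d\<in>?D. of_int (moebius_mu (n div d)) * g d)
      = (\<Sum>d\<in>?D. \<Sum>e\<in>{e\<in>?D. e dvd d}. of_int (moebius_mu (n div d)) * f e)"
  proof (rule sum.cong[OF refl])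
    fix d assume d: "d \<in> ?D"
    hence "d > 0" using n by (simp add: dvd_pos_nat)
    hence "g d = (\<Sum>e | e dvd d. f e)" by (rule g)
    also have "{e. e dvd d} = {e\<in>?D. e dvd d}" using d by (auto intro: dvd_trans)
    finally show "of_int (moebius_mu (n div d)) * g d = (\<Sum>e\<in>{e\<in>?D. e dvd d}. of_int (moebius_mu (n div d)) * f e)"
      by (simp add: sum_distrib_left)
  qed
  also have "\<dots> = (\<Sum>e\<in>?D. \<Sum>d | d \<in> ?D \<and> e dvd d. of_int (moebius_mu (n div d)) * f e)"
    by (rule sum.swap_restrict[OF fin fin, where g="\<lambda>d e. of_int (moebius_mu (n div d)) * f e" and R="\<lambda>d e. e dvd d"])
  also have "\<dots> = (\<Sum>e\<in>?D. of_int (\<Sum>d | d dvd n \<and> e dvd d. moebius_mu (n div d)) * f e)"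
    by (simp add: sum_distrib_right of_int_sum)
  also have "\<dots> = (\<Sum>e\<in>?D. if e = n then f e else 0)"
  proof (rule sum.cong[OF refl])
    fix e assume e: "e \<in> ?D"
    obtain k where k: "n = e*k" using e by (auto elim!: dvdE)
    have e0: "e > 0" "k > 0" using n k by (auto intro: Nat.gr0I)
    have ne: "n div e = k" using k e0 by simp
    have "n div e > 0" using ne e0 by simp
    moreover have "n div e = 1 \<longleftrightarrow> e = n" using ne k e0 by auto
    ultimately have "(\<Sum>d | d dvd n \<and> e dvd d. moebius_mu (n div d)) = (if e = n then 1 else 0)"
      using divisor_reindex[OF n] e mu_sum_gen[of "n div e"] by simp
    thus "of_int (\<Sum>d | d dvd n \<and> e dvd d. moebius_mu (n div d)) * f e = (if e = n then f e else 0)"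
      by simp
  qed
  also have "\<dots> = f n" using fin by (simp add: sum.delta)
  finally show ?thesis by simp
qed


abbreviation "ZG n \<equiv> integer_mod_group n"

lemma neg_mod_eq: "1 \<le> x \<Longrightarrow> x < int n \<Longrightarrow> (-x) mod int n = int n - x"
proof -
  assume a: "1 \<le> x" "x < int n"
  have "int n - x = -x + int n" by simp
  hence "(-x) mod int n = (int n - x) mod int n" by (simp only: mod_add_self2)
  also have "\<dots> = int n - x" by (rule mod_pos_pos_trivial) (use a in auto)
  finally show ?thesis .
qed

lemma gen_imp:
  assumes n: "n \<ge> 1" and S: "S \<subseteq> {0..<int n}"
    and g: "generate (ZG n) S = {0..<int n}"
  shows "Gcd (insert (int n) S) = 1"
proof -
  let ?e = "Gcd (insert (int n) S)"
  let ?H = "{x \<in> {0..<int n}. ?e dvd x}"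
  have en: "?e dvd int n" by (rule Gcd_dvd) simp
  have es: "\<And>s. s \<in> S \<Longrightarrow> ?e dvd s" by (rule Gcd_dvd) simp
  have sub: "subgroup ?H (ZG n)"
  proof (rule group.subgroupI[OF group_integer_mod_group])
    show "?H \<subseteq> carrier (ZG n)" by (auto simp: carrier_integer_mod_group)
    show "?H \<noteq> {}" using n by (auto intro!: exI[of _ 0])
    fix a assume a: "a \<in> ?H"
    have "inv\<^bsub>ZG n\<^esub> a = (-a) mod int n" using a by (simp add: carrier_integer_mod_group)
    moreover have "?e dvd (-a) mod int n" using a en by (simp add: dvd_mod_iff)
    ultimately show "inv\<^bsub>ZG n\<^esub> a \<in> ?H" using n by simp
  next
    fix a b assume a: "a \<in> ?H" and b: "b \<in> ?H"
    have "?e dvd (a + b) mod int n" using a b en by (simp add: dvd_mod_iff)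
    thus "a \<otimes>\<^bsub>ZG n\<^esub> b \<in> ?H" using n by simp
  qed
  have "generate (ZG n) S \<subseteq> ?H"
    by (rule group.generate_subgroup_incl[OF group_integer_mod_group _ sub]) (use S es in auto)
  hence carr: "{0..<int n} \<subseteq> ?H" using g by simp
  have "?e dvd 1"
  proof (cases "n = 1")
    case True thus ?thesis using en by simp
  next
    case False
    hence "(1::int) \<in> {0..<int n}" using n by simp
    thus ?thesis using carr by blast
  qed
  moreover have "?e \<ge> 0" by simp
  ultimately show ?thesis by simp
qed

lemma gen_rev:
  assumes n: "n \<ge> 1" and S: "S \<subseteq> {0..<int n}"
    and gcd: "Gcd (insert (int n) S) = 1"
  shows "generate (ZG n) S = {0..<int n}"
proof -
  let ?K = "generate (ZG n) S"
  have Ssub: "S \<subseteq> carrier (ZG n)" using S by (simp add: carrier_integer_mod_group)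
  have K: "subgroup ?K (ZG n)" by (rule group.generate_is_subgroup[OF group_integer_mod_group Ssub])
  define L where "L = {x::int. x mod int n \<in> ?K}"
  have modc: "\<And>x. x mod int n \<in> carrier (ZG n)" using n by (simp add: carrier_integer_mod_group)
  have addL: "\<And>x y. x \<in> L \<Longrightarrow> y \<in> L \<Longrightarrow> x + y \<in> L"
  proof -
    fix x y assume "x \<in> L" "y \<in> L"
    hence "(x mod int n) \<otimes>\<^bsub>ZG n\<^esub> (y mod int n) \<in> ?K" using subgroup.m_closed[OF K] unfolding L_def by blast
    thus "x + y \<in> L" unfolding L_def by (simp add: mod_add_eq)
  qed
  have negL: "\<And>x. x \<in> L \<Longrightarrow> -x \<in> L"
  proof -
    fix x assume "x \<in> L"
    hence "inv\<^bsub>ZG n\<^esub> (x mod int n) \<in> ?K" using subgroup.m_inv_closed[OF K] unfolding L_def by blast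
    moreover have "inv\<^bsub>ZG n\<^esub> (x mod int n) = (-x) mod int n"
      using modc[of x] by (simp add: mod_minus_eq)
    ultimately show "-x \<in> L" unfolding L_def by simp
  qed
  have zeroL: "0 \<in> L" unfolding L_def using subgroup.one_closed[OF K] by simp
  have nL: "int n \<in> L" unfolding L_def using subgroup.one_closed[OF K] by simp
  have SL: "S \<subseteq> L"
  proof
    fix s assume s: "s \<in> S"
    hence "s mod int n = s" using S by (auto simp: mod_pos_pos_trivial)
    thus "s \<in> L" unfolding L_def using s generate.incl[of s S "ZG n"] by simp
  qed
  have multL_nat: "\<And>k x. x \<in> L \<Longrightarrow> int k * x \<in> L"
  proof -
    fix k x assume x: "x \<in> L"
    show "int k * x \<in> L"
    proof (induction k)
      case 0 thus ?case using zeroL by simp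
    next
      case (Suc k)
      have "int (Suc k) * x = int k * x + x" by (simp add: algebra_simps)
      thus ?case using addL[OF Suc x] by simp
    qed
  qed
  have multL: "\<And>q x. x \<in> L \<Longrightarrow> q * x \<in> L"
  proof -
    fix q :: int and x assume x: "x \<in> L"
    show "q * x \<in> L"
    proof (cases "q \<ge> 0")
      case True thus ?thesis using multL_nat[OF x, of "nat q"] by simp
    next
      case False
      hence "q * x = - (int (nat (-q)) * x)" by simp
      thus ?thesis using negL[OF multL_nat[OF x, of "nat (-q)"]] by simp
    qed
  qed
  define m where "m = (LEAST k::nat. k > 0 \<and> int k \<in> L)"
  have ex: "n > 0 \<and> int n \<in> L" using n nL by simp
  have m: "m > 0 \<and> int m \<in> L" unfolding m_def by (rule LeastI[of _ n]) (rule ex)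
  have mmin: "\<And>k. k > 0 \<Longrightarrow> int k \<in> L \<Longrightarrow> m \<le> k" unfolding m_def by (rule Least_le) simp
  have mdvd: "\<And>x. x \<in> L \<Longrightarrow> int m dvd x"
  proof -
    fix x assume x: "x \<in> L"
    have "x + (-(x div int m)) * int m \<in> L" by (rule addL[OF x multL[OF conjunct2[OF m]]])
    hence "x - x div int m * int m \<in> L" by simp
    hence r: "x mod int m \<in> L" by (simp add: minus_div_mult_eq_mod)
    have r0: "0 \<le> x mod int m" "x mod int m < int m" using m by simp_all
    show "int m dvd x"
    proof (rule ccontr)
      assume "\<not> int m dvd x"
      hence "x mod int m \<noteq> 0" by (simp add: dvd_eq_mod_eq_0)
      hence "nat (x mod int m) > 0" using r0 by simp
      moreover have "int (nat (x mod int m)) \<in> L" using r r0 by simp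
      ultimately have "m \<le> nat (x mod int m)" by (rule mmin)
      thus False using r0 by simp
    qed
  qed
  have "int m dvd Gcd (insert (int n) S)"
    by (rule Gcd_greatest) (use mdvd nL SL in auto)
  hence "int m dvd 1" by (simp only: gcd)
  hence m1: "m = 1" by simp
  hence oneL: "1 \<in> L" using m by simp
  show ?thesis
  proof
    show "?K \<subseteq> {0..<int n}" using group.generate_incl[OF group_integer_mod_group Ssub] n
      by (simp add: carrier_integer_mod_group)
    show "{0..<int n} \<subseteq> ?K"
    proof
      fix x assume x: "x \<in> {0..<int n}"
      have "x \<in> L" using multL[OF oneL, of x] by simp
      moreover have "x mod int n = x" using x by (simp add: mod_pos_pos_trivial)
      ultimately show "x \<in> ?K" unfolding L_def by simp
    qed
  qed
qed

definition IC :: "nat \<Rightarrow> int set set" where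
  "IC n = {S. S \<subseteq> {1..<int n} \<and> (\<forall>x\<in>S. int n - x \<in> S)}"

lemma gis_char:
  assumes n: "n \<ge> 1"
  shows "gen_inv_sets (ZG n) k = {S \<in> IC n. Gcd (insert (int n) S) = 1 \<and> card S = k}"
proof (intro Set.set_eqI iffI)
  fix S assume "S \<in> gen_inv_sets (ZG n) k"
  hence S: "S \<subseteq> {0..<int n}" "m_inv (ZG n) ` S = S" "generate (ZG n) S = {0..<int n}"
     "0 \<notin> S" "card S = k"
    unfolding gen_inv_sets_def using n by (auto simp: carrier_integer_mod_group)
  have S1: "S \<subseteq> {1..<int n}"
  proof
    fix x assume x: "x \<in> S"
    hence "0 \<le> x" "x < int n" "x \<noteq> 0" using S(1,4) by auto
    thus "x \<in> {1..<int n}" by simp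
  qed
  have cl: "\<forall>x\<in>S. int n - x \<in> S"
  proof
    fix x assume x: "x \<in> S"
    hence "m_inv (ZG n) x \<in> S" using S(2) by blast
    moreover have "m_inv (ZG n) x = int n - x" using x S1 neg_mod_eq[of x n]
      by (subst inv_integer_mod_group) (auto simp: carrier_integer_mod_group)
    ultimately show "int n - x \<in> S" by simp
  qed
  show "S \<in> {S \<in> IC n. Gcd (insert (int n) S) = 1 \<and> card S = k}"
    using S1 cl gen_imp[OF n S(1) S(3)] S(5) unfolding IC_def by auto
next
  fix S assume "S \<in> {S \<in> IC n. Gcd (insert (int n) S) = 1 \<and> card S = k}"
  hence S1: "S \<subseteq> {1..<int n}" and cl: "\<forall>x\<in>S. int n - x \<in> S"
    and g: "Gcd (insert (int n) S) = 1" and c: "card S = k" unfolding IC_def by auto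
  have S0: "S \<subseteq> {0..<int n}" using S1 by auto
  have inv: "\<And>x. x \<in> S \<Longrightarrow> m_inv (ZG n) x = int n - x" using S1 neg_mod_eq
    by (subst inv_integer_mod_group) (auto simp: carrier_integer_mod_group)
  have "m_inv (ZG n) ` S = S"
  proof
    show "m_inv (ZG n) ` S \<subseteq> S" using inv cl by auto
    show "S \<subseteq> m_inv (ZG n) ` S"
    proof
      fix x assume x: "x \<in> S"
      hence "int n - x \<in> S" using cl by blast
      moreover have "m_inv (ZG n) (int n - x) = x" using inv[OF \<open>int n - x \<in> S\<close>] by simp
      ultimately show "x \<in> m_inv (ZG n) ` S" by (metis image_eqI)
    qed
  qed
  thus "S \<in> gen_inv_sets (ZG n) k"
    using n S0 S1 gen_rev[OF n S0 g] c unfolding gen_inv_sets_def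
    by (auto simp: carrier_integer_mod_group)
qed


definition Pc :: "int set set \<Rightarrow> int poly" where
  "Pc F = (\<Sum>S\<in>F. monom 1 (card S))"

lemma IC_fin: "finite (IC n)"
proof (rule finite_subset)
  show "IC n \<subseteq> Pow {1..<int n}" unfolding IC_def by auto
qed simp

lemma IC_elem_fin: "S \<in> IC n \<Longrightarrow> finite S"
  unfolding IC_def by (auto intro: finite_subset)

lemma IC_1: "IC 1 = {{}}"
  unfolding IC_def by auto

lemma IC_2: "IC 2 = {{}, {1}}"
proof -
  have e: "{1..<int 2} = {1::int}" by auto
  show ?thesis unfolding IC_def e by (auto simp: subset_singleton_iff)
qed

definition sh :: "int set \<Rightarrow> int set" where "sh T = (\<lambda>x. x + 1) ` T"

lemma sh_inv: "(\<lambda>x. x - 1) ` sh T = T"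
  unfolding sh_def by (simp add: image_image)

lemma sh_inj: "inj sh"
  by (rule injI) (metis sh_inv)

lemma card_sh: "card (sh T) = card T"
  unfolding sh_def by (rule card_image) (auto simp: inj_on_def)

lemma IC_step_sets:
  assumes n: "n \<ge> 1"
  shows "IC (n+2) = sh ` IC n \<union> (\<lambda>T. insert 1 (insert (int n + 1) (sh T))) ` IC n"
proof (intro Set.set_eqI iffI)
  fix S assume S: "S \<in> IC (n+2)"
  have e2: "int (n+2) = int n + 2" by simp
  have S1: "S \<subseteq> {1..<int n + 2}" using S unfolding IC_def e2 by blast
  have cl: "\<And>x. x \<in> S \<Longrightarrow> int n + 2 - x \<in> S" using S unfolding IC_def e2 by blast
  define T where "T = (\<lambda>x. x - 1) ` (S - {1, int n + 1})"
  have shT: "sh T = S - {1, int n + 1}" unfolding T_def sh_def by (auto simp: image_image)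
  have T: "T \<in> IC n"
    unfolding IC_def
  proof (intro CollectI conjI ballI)
    show "T \<subseteq> {1..<int n}" unfolding T_def using S1 by force
    fix y assume "y \<in> T"
    then obtain x where x: "x \<in> S" "x \<noteq> 1" "x \<noteq> int n + 1" "y = x - 1" unfolding T_def by auto
    have "int n + 2 - x \<in> S" using cl x by simp
    moreover have "int n + 2 - x \<noteq> 1" "int n + 2 - x \<noteq> int n + 1" using x by auto
    ultimately have "int n + 2 - x \<in> S - {1, int n + 1}" by simp
    hence "int n + 2 - x - 1 \<in> T" unfolding T_def by blast
    moreover have "int n + 2 - x - 1 = int n - y" using x by simp
    ultimately show "int n - y \<in> T" by simp
  qed
  have c1: "1 \<in> S \<Longrightarrow> int n + 1 \<in> S"
  proof -
    assume "1 \<in> S"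
    hence "int n + 2 - 1 \<in> S" by (rule cl)
    moreover have "int n + 2 - 1 = int n + 1" by simp
    ultimately show ?thesis by metis
  qed
  have c2: "int n + 1 \<in> S \<Longrightarrow> 1 \<in> S"
  proof -
    assume "int n + 1 \<in> S"
    hence "int n + 2 - (int n + 1) \<in> S" by (rule cl)
    moreover have "int n + 2 - (int n + 1) = 1" by simp
    ultimately show ?thesis by metis
  qed
  have iff: "1 \<in> S \<longleftrightarrow> int n + 1 \<in> S" using c1 c2 by blast
  show "S \<in> sh ` IC n \<union> (\<lambda>T. insert 1 (insert (int n + 1) (sh T))) ` IC n"
  proof (cases "1 \<in> S")
    case True
    hence nn: "1 \<in> S" "int n + 1 \<in> S" using iff by auto
    have "insert 1 (insert (int n + 1) (S - {1, int n + 1})) = S" using nn by blast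
    hence "S = insert 1 (insert (int n + 1) (S - {1, int n + 1}))" by simp
    hence SS: "S = insert 1 (insert (int n + 1) (sh T))" using shT by simp
    have "S \<in> (\<lambda>T. insert 1 (insert (int n + 1) (sh T))) ` IC n"
      by (rule image_eqI[where f="\<lambda>T. insert 1 (insert (int n + 1) (sh T))", OF SS T])
    thus ?thesis by (rule UnI2)
  next
    case False
    hence nn: "1 \<notin> S" "int n + 1 \<notin> S" using iff by auto
    have "S - {1, int n + 1} = S" by (rule Diff_triv) (use nn in simp)
    hence SS: "S = sh T" using shT by simp
    have "S \<in> sh ` IC n" by (rule image_eqI[where f=sh, OF SS T])
    thus ?thesis by (rule UnI1)
  qed
next
  fix S assume "S \<in> sh ` IC n \<union> (\<lambda>T. insert 1 (insert (int n + 1) (sh T))) ` IC n"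
  then obtain T where T: "T \<in> IC n" and S: "S = sh T \<or> S = insert 1 (insert (int n + 1) (sh T))" by blast
  from T have T1: "T \<subseteq> {1..<int n}" and cl: "\<And>x. x \<in> T \<Longrightarrow> int n - x \<in> T"
    unfolding IC_def by auto
  have a: "sh T \<subseteq> {1..<int (n+2)}" using T1 unfolding sh_def by auto
  have b: "\<And>x. x \<in> sh T \<Longrightarrow> int (n+2) - x \<in> sh T"
  proof -
    fix x assume "x \<in> sh T"
    then obtain y where y: "y \<in> T" "x = y + 1" unfolding sh_def by auto
    hence "int n - y \<in> T" using cl by simp
    hence "int n - y + 1 \<in> sh T" unfolding sh_def by blast
    thus "int (n+2) - x \<in> sh T" using y by (simp add: algebra_simps)
  qed
  show "S \<in> IC (n+2)"
    using S
  proof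
    assume "S = sh T" thus ?thesis using a b unfolding IC_def by blast
  next
    assume SS: "S = insert 1 (insert (int n + 1) (sh T))"
    have "S \<subseteq> {1..<int (n+2)}" using a n unfolding SS by auto
    moreover have "\<forall>x\<in>S. int (n+2) - x \<in> S"
    proof
      fix x assume "x \<in> S"
      hence "x = 1 \<or> x = int n + 1 \<or> x \<in> sh T" unfolding SS by blast
      thus "int (n+2) - x \<in> S"
      proof (elim disjE)
        assume "x = 1" thus ?thesis unfolding SS by simp
      next
        assume "x = int n + 1" thus ?thesis unfolding SS by simp
      next
        assume "x \<in> sh T" thus ?thesis using b unfolding SS by blast
      qed
    qed
    ultimately show ?thesis unfolding IC_def by blast
  qed
qed

lemma sh_not: "T \<in> IC n \<Longrightarrow> 1 \<notin> sh T \<and> int n + 1 \<notin> sh T"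
  unfolding IC_def sh_def by auto

lemma IC_step:
  assumes n: "n \<ge> 1"
  shows "Pc (IC (n+2)) = [:1,0,1:] * Pc (IC n)"
proof -
  let ?f = "\<lambda>T. insert 1 (insert (int n + 1) (sh T))"
  have disj: "sh ` IC n \<inter> ?f ` IC n = {}"
    using sh_not by blast
  have injf: "inj_on ?f (IC n)"
  proof (rule inj_onI)
    fix T T' assume T: "T \<in> IC n" "T' \<in> IC n" and eq: "?f T = ?f T'"
    have "sh T = ?f T - {1, int n + 1}" using sh_not[OF T(1)] by auto
    moreover have "sh T' = ?f T' - {1, int n + 1}" using sh_not[OF T(2)] by auto
    ultimately have "sh T = sh T'" using eq by simp
    thus "T = T'" using sh_inj by (simp add: inj_eq)
  qed
  have cardf: "\<And>T. T \<in> IC n \<Longrightarrow> card (?f T) = card T + 2"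
  proof -
    fix T assume T: "T \<in> IC n"
    have "1 \<notin> sh T" "int n + 1 \<notin> sh T" using sh_not[OF T] by auto
    moreover have "finite (sh T)" using IC_elem_fin[OF T] unfolding sh_def by simp
    moreover have "(1::int) \<noteq> int n + 1" using n by simp
    ultimately show "card (?f T) = card T + 2" by (simp add: card_sh)
  qed
  have poly2: "[:1,0,1:] = 1 + (monom 1 2 :: int poly)"
    by (rule poly_eqI) (auto simp: coeff_pCons coeff_monom split: nat.split)
  have "Pc (IC (n+2)) = Pc (sh ` IC n) + Pc (?f ` IC n)"
    unfolding IC_step_sets[OF n] Pc_def
    by (rule sum.union_disjoint) (use IC_fin disj in auto)
  also have "Pc (sh ` IC n) = Pc (IC n)"
    unfolding Pc_def by (subst sum.reindex) (auto intro: inj_on_subset[OF sh_inj] simp: card_sh)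
  also have "Pc (?f ` IC n) = (\<Sum>T\<in>IC n. monom 1 (card T + 2))"
    unfolding Pc_def by (subst sum.reindex[OF injf]) (simp add: cardf)
  also have "\<dots> = monom 1 2 * Pc (IC n)"
    unfolding Pc_def by (simp add: sum_distrib_left mult_monom add.commute)
  also have "Pc (IC n) + monom 1 2 * Pc (IC n) = (1 + monom 1 2) * Pc (IC n)"
    by (simp add: distrib_right)
  also have "\<dots> = [:1,0,1:] * Pc (IC n)" using poly2 by simp
  finally show ?thesis .
qed

definition Fm :: "nat \<Rightarrow> int poly" where
  "Fm d = [:1, 0, 1:] ^ ((d - 1) div 2) * [:1, 1:] ^ nat ((1 + (-1) ^ d) div 2)"

lemma IC_formula: "n \<ge> 1 \<Longrightarrow> Pc (IC n) = Fm n"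
proof (induction n rule: less_induct)
  case (less n)
  show ?case
  proof (cases "n \<le> 2")
    case True
    hence "n = 1 \<or> n = 2" using less.prems by auto
    thus ?thesis
    proof
      assume n1: "n = 1"
      have "Pc (IC 1) = 1" unfolding IC_1 Pc_def by simp
      moreover have "Fm 1 = 1" unfolding Fm_def by simp
      ultimately show ?thesis using n1 by simp
    next
      assume n2: "n = 2"
      have "Pc (IC 2) = monom 1 0 + monom 1 1" unfolding IC_2 Pc_def by simp
      also have "\<dots> = [:1,1:]"
        by (rule poly_eqI) (auto simp: coeff_pCons coeff_monom split: nat.split)
      also have "\<dots> = Fm 2" unfolding Fm_def by simp
      finally show ?thesis using n2 by simp
    qed
  next
    case False
    define k where "k = n - 2"
    have k: "n = k + 2" "k \<ge> 1" using False unfolding k_def by auto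
    have "Pc (IC n) = [:1,0,1:] * Fm k" using IC_step[OF k(2)] less.IH[of k] k by simp
    also have "\<dots> = Fm n"
    proof -
      have "(n - 1) div 2 = Suc ((k - 1) div 2)" using k by simp
      moreover have "((-1::int) ^ n) = (-1) ^ k" using k by simp
      ultimately show ?thesis unfolding Fm_def by (simp only: power_Suc mult.assoc)
    qed
    finally show ?thesis .
  qed
qed


definition GenF :: "nat \<Rightarrow> int set set" where
  "GenF n = {S \<in> IC n. Gcd (insert (int n) S) = 1}"

definition psi :: "nat \<Rightarrow> int set \<Rightarrow> int set" where
  "psi e T = (*) (int e) ` T"

lemma mult_inj: "e > 0 \<Longrightarrow> inj ((*) (int e))"
  by (rule injI) simp

lemma psi_inj: "e > 0 \<Longrightarrow> inj (psi e)"
  by (rule injI) (simp add: psi_def inj_image_eq_iff[OF mult_inj])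

lemma card_psi: assumes "e > 0" shows "card (psi e T) = card T"
proof -
  have "inj_on ((*) (int e)) T" using mult_inj[OF assms] by (rule inj_on_subset) simp
  thus ?thesis unfolding psi_def by (rule card_image)
qed

lemma Pc_psi: "e > 0 \<Longrightarrow> Pc (psi e ` F) = Pc F"
  unfolding Pc_def by (subst sum.reindex) (auto intro: inj_on_subset[OF psi_inj] simp: card_psi)

lemma Gcd_psi:
  assumes e: "e > 0"
  shows "Gcd (insert (int (e*m)) (psi e T)) = int e * Gcd (insert (int m) T)"
proof -
  have eq: "insert (int (e*m)) (psi e T) = (*) (int e) ` insert (int m) T"
    unfolding psi_def by simp
  have "Gcd (insert (int (e*m)) (psi e T)) = Gcd ((*) (int e) ` insert (int m) T)"
    by (simp only: eq)
  also have "\<dots> = normalize (int e * Gcd (insert (int m) T))"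
    by (rule Gcd_mult)
  also have "\<dots> = int e * Gcd (insert (int m) T)"
    by (simp add: abs_mult)
  finally show ?thesis .
qed

lemma class_eq:
  assumes n: "n \<ge> 1" and e: "e dvd n"
  shows "{S \<in> IC n. nat (Gcd (insert (int n) S)) = e} = psi e ` GenF (n div e)"
proof -
  define m where "m = n div e"
  have nm: "n = e * m" unfolding m_def using e by simp
  have e0: "e > 0" and m0: "m > 0" using nm n by (auto intro: Nat.gr0I)
  have ie: "int e > 0" using e0 by simp
  show ?thesis
  proof (intro Set.set_eqI iffI)
    fix S assume "S \<in> {S \<in> IC n. nat (Gcd (insert (int n) S)) = e}"
    hence S: "S \<in> IC n" and g: "nat (Gcd (insert (int n) S)) = e" by auto
    have g0: "Gcd (insert (int n) S) \<ge> 0" by simp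
    hence gg: "int (nat (Gcd (insert (int n) S))) = Gcd (insert (int n) S)" by (rule nat_0_le)
    have g': "Gcd (insert (int n) S) = int e" using gg g by metis
    have dv: "\<And>x. x \<in> S \<Longrightarrow> int e dvd x"
      by (metis g' Gcd_dvd insertI2)
    define T where "T = (\<lambda>x. x div int e) ` S"
    have ST: "S = psi e T"
    proof -
      have "\<And>x. x \<in> S \<Longrightarrow> x = int e * (x div int e)" using dv by simp
      hence "S = (\<lambda>x. int e * (x div int e)) ` S" by (auto simp: image_iff)
      thus ?thesis unfolding psi_def T_def by (simp add: image_image)
    qed
    have S1: "S \<subseteq> {1..<int n}" and cl: "\<And>x. x \<in> S \<Longrightarrow> int n - x \<in> S"
      using S unfolding IC_def by auto
    have T1: "T \<subseteq> {1..<int m}"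
    proof
      fix y assume "y \<in> T"
      then obtain x where x: "x \<in> S" "y = x div int e" unfolding T_def by auto
      have xe: "x = int e * y" using dv[OF x(1)] x(2) by simp
      have h: "1 \<le> int e * y" "int e * y < int e * int m" using S1 x(1) xe nm by auto
      have "0 < int e * y" using h(1) by simp
      hence "0 < y" using ie by (simp add: zero_less_mult_iff)
      moreover have "y < int m" using h(2) ie by (simp add: mult_less_cancel_left)
      ultimately
      show "y \<in> {1..<int m}" by simp
    qed
    have clT: "\<And>y. y \<in> T \<Longrightarrow> int m - y \<in> T"
    proof -
      fix y assume "y \<in> T"
      then obtain x where x: "x \<in> S" "y = x div int e" unfolding T_def by auto
      have xe: "x = int e * y" using dv[OF x(1)] x(2) by simp
      have "int n - x = int e * (int m - y)" using xe nm by (simp add: algebra_simps)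
      moreover have "int n - x \<in> S" using cl x(1) by simp
      ultimately have "(int e * (int m - y)) div int e \<in> T" unfolding T_def by (metis image_eqI)
      thus "int m - y \<in> T" using ie by simp
    qed
    have "int e = int e * Gcd (insert (int m) T)"
      using g' Gcd_psi[OF e0, of m T] ST nm by simp
    hence gT: "Gcd (insert (int m) T) = 1" using ie by simp
    have "T \<in> GenF m" unfolding GenF_def IC_def using T1 clT gT by auto
    thus "S \<in> psi e ` GenF (n div e)" using ST unfolding m_def by blast
  next
    fix S assume "S \<in> psi e ` GenF (n div e)"
    then obtain T where T: "T \<in> GenF m" and ST: "S = psi e T" unfolding m_def by auto
    have T1: "T \<subseteq> {1..<int m}" and clT: "\<And>y. y \<in> T \<Longrightarrow> int m - y \<in> T"
      and gT: "Gcd (insert (int m) T) = 1" using T unfolding GenF_def IC_def by auto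
    have S1: "S \<subseteq> {1..<int n}"
    proof
      fix x assume "x \<in> S"
      then obtain y where y: "y \<in> T" "x = int e * y" unfolding ST psi_def by auto
      have y1: "1 \<le> y" "y < int m" using T1 y(1) by auto
      have e1: "1 \<le> int e" using e0 by simp
      have "1 * 1 \<le> int e * y" using mult_mono[OF e1 y1(1)] by simp
      moreover have "int e * y < int e * int m" using y1(2) ie by simp
      ultimately have "1 \<le> x" "x < int n" using y(2) nm by auto
      thus "x \<in> {1..<int n}" by simp
    qed
    have cl: "\<And>x. x \<in> S \<Longrightarrow> int n - x \<in> S"
    proof -
      fix x assume "x \<in> S"
      then obtain y where y: "y \<in> T" "x = int e * y" unfolding ST psi_def by auto
      have "int n - x = int e * (int m - y)" using y nm by (simp add: algebra_simps)
      moreover have "int m - y \<in> T" using clT y(1) by simp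
      ultimately show "int n - x \<in> S" unfolding ST psi_def by auto
    qed
    have "Gcd (insert (int n) S) = int e" using Gcd_psi[OF e0, of m T] ST nm gT by simp
    thus "S \<in> {S \<in> IC n. nat (Gcd (insert (int n) S)) = e}"
      using S1 cl unfolding IC_def by auto
  qed
qed

lemma key_dvd:
  assumes "S \<in> IC n"
  shows "nat (Gcd (insert (int n) S)) dvd n"
proof -
  have "Gcd (insert (int n) S) dvd int n" by (rule Gcd_dvd) simp
  moreover have "Gcd (insert (int n) S) \<ge> 0" by simp
  ultimately show ?thesis by (metis int_nat_eq nat_dvd_iff nat_int)
qed

lemma IC_decomp:
  assumes n: "n \<ge> 1"
  shows "Pc (IC n) = (\<Sum>d | d dvd n. Pc (GenF d))"
proof -
  let ?key = "\<lambda>S. nat (Gcd (insert (int n) S))"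
  let ?D = "{d. d dvd n}"
  have fin: "finite ?D" using n by simp
  have "Pc (IC n) = (\<Sum>e\<in>?D. \<Sum>S\<in>{S \<in> IC n. ?key S = e}. monom 1 (card S))"
    unfolding Pc_def
    by (rule sum.group[symmetric, OF IC_fin fin]) (use key_dvd in auto)
  also have "\<dots> = (\<Sum>e\<in>?D. Pc (GenF (n div e)))"
  proof (rule sum.cong[OF refl])
    fix e assume e: "e \<in> ?D"
    hence e0: "e > 0" using n by (auto intro: Nat.gr0I)
    have "(\<Sum>S\<in>{S \<in> IC n. ?key S = e}. monom 1 (card S)) = Pc {S \<in> IC n. ?key S = e}"
      unfolding Pc_def ..
    also have "\<dots> = Pc (psi e ` GenF (n div e))" using class_eq[OF n] e by simp
    also have "\<dots> = Pc (GenF (n div e))" by (rule Pc_psi[OF e0])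
    finally show "(\<Sum>S\<in>{S \<in> IC n. ?key S = e}. monom 1 (card S)) = Pc (GenF (n div e))" .
  qed
  also have "\<dots> = (\<Sum>d\<in>?D. Pc (GenF d))"
  proof (rule sum.reindex_bij_witness[where i = "\<lambda>d. n div d" and j = "\<lambda>d. n div d"])
    fix a assume a: "a \<in> ?D"
    then obtain k where k: "n = a * k" by (auto elim!: dvdE)
    have a0: "a > 0" "k > 0" using k n by (auto intro: Nat.gr0I)
    show "n div (n div a) = a" using k a0 by simp
    show "n div a \<in> ?D" using k a0 by simp
    show "Pc (GenF (n div a)) = Pc (GenF (n div a))" by simp
  next
    fix a assume a: "a \<in> ?D"
    then obtain k where k: "n = a * k" by (auto elim!: dvdE)
    have a0: "a > 0" "k > 0" using k n by (auto intro: Nat.gr0I)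
    show "n div (n div a) = a" using k a0 by simp
    show "n div a \<in> ?D" using k a0 by simp
  qed
  finally show ?thesis .
qed


lemma quot_Id_card: "card (S // Id_on S) = card S"
proof -
  have "S // Id_on S = (\<lambda>x. {x}) ` S" unfolding quotient_def by auto
  moreover have "inj_on (\<lambda>x. {x}) S" by (auto simp: inj_on_def)
  ultimately show ?thesis by (simp add: card_image)
qed

lemma inn_rel_ZG:
  assumes "\<And>A. A \<in> S \<Longrightarrow> A \<subseteq> carrier (ZG n)"
  shows "inn_rel (ZG n) S = Id_on S"
proof -
  interpret comm_group "ZG n" by (rule abelian_integer_mod_group)
  have conj: "\<And>g A. g \<in> carrier (ZG n) \<Longrightarrow> A \<subseteq> carrier (ZG n) \<Longrightarrow>
      (\<lambda>x. g \<otimes>\<^bsub>ZG n\<^esub> x \<otimes>\<^bsub>ZG n\<^esub> inv\<^bsub>ZG n\<^esub> g) ` A = A"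
  proof -
    fix g A assume g: "g \<in> carrier (ZG n)" and A: "A \<subseteq> carrier (ZG n)"
    have "\<And>x. x \<in> A \<Longrightarrow> g \<otimes>\<^bsub>ZG n\<^esub> x \<otimes>\<^bsub>ZG n\<^esub> inv\<^bsub>ZG n\<^esub> g = x"
    proof -
      fix x assume "x \<in> A"
      hence x: "x \<in> carrier (ZG n)" using A by auto
      have "g \<otimes>\<^bsub>ZG n\<^esub> x = x \<otimes>\<^bsub>ZG n\<^esub> g" by (rule m_comm[OF g x])
      hence "g \<otimes>\<^bsub>ZG n\<^esub> x \<otimes>\<^bsub>ZG n\<^esub> inv\<^bsub>ZG n\<^esub> g = x \<otimes>\<^bsub>ZG n\<^esub> g \<otimes>\<^bsub>ZG n\<^esub> inv\<^bsub>ZG n\<^esub> g"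
        by (simp only:)
      also have "\<dots> = x \<otimes>\<^bsub>ZG n\<^esub> (g \<otimes>\<^bsub>ZG n\<^esub> inv\<^bsub>ZG n\<^esub> g)"
        by (rule m_assoc[OF x g inv_closed[OF g]])
      also have "\<dots> = x" by (simp only: r_inv[OF g] r_one[OF x])
      finally show "g \<otimes>\<^bsub>ZG n\<^esub> x \<otimes>\<^bsub>ZG n\<^esub> inv\<^bsub>ZG n\<^esub> g = x" .
    qed
    thus "(\<lambda>x. g \<otimes>\<^bsub>ZG n\<^esub> x \<otimes>\<^bsub>ZG n\<^esub> inv\<^bsub>ZG n\<^esub> g) ` A = A" by simp
  qed
  have z: "(0::int) \<in> carrier (ZG n)" by simp
  show ?thesis
  proof (intro Set.set_eqI iffI)
    fix p assume "p \<in> inn_rel (ZG n) S"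
    then obtain a b where p: "p = (a, b)" "a \<in> S" "b \<in> S"
      and "\<exists>g\<in>carrier (ZG n). b = (\<lambda>x. g \<otimes>\<^bsub>ZG n\<^esub> x \<otimes>\<^bsub>ZG n\<^esub> inv\<^bsub>ZG n\<^esub> g) ` a"
      unfolding inn_rel_def by auto
    then obtain g where "g \<in> carrier (ZG n)" "b = (\<lambda>x. g \<otimes>\<^bsub>ZG n\<^esub> x \<otimes>\<^bsub>ZG n\<^esub> inv\<^bsub>ZG n\<^esub> g) ` a" by blast
    hence "b = a" using conj assms p(2) by simp
    thus "p \<in> Id_on S" using p by auto
  next
    fix p assume "p \<in> Id_on S"
    then obtain a where p: "p = (a, a)" "a \<in> S" by (auto simp: Id_on_def)
    have "a = (\<lambda>x. 0 \<otimes>\<^bsub>ZG n\<^esub> x \<otimes>\<^bsub>ZG n\<^esub> inv\<^bsub>ZG n\<^esub> 0) ` a" using conj[OF z assms[OF p(2)]] by simp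
    thus "p \<in> inn_rel (ZG n) S" unfolding inn_rel_def using p z by blast
  qed
qed

lemma a_k_ZG:
  assumes n: "n \<ge> 1"
  shows "a_k (ZG n) k = card {S \<in> GenF n. card S = k}"
proof -
  have sub: "\<And>A. A \<in> gen_inv_sets (ZG n) k \<Longrightarrow> A \<subseteq> carrier (ZG n)"
    unfolding gen_inv_sets_def by auto
  have ir: "inn_rel (ZG n) (gen_inv_sets (ZG n) k) = Id_on (gen_inv_sets (ZG n) k)"
    by (rule inn_rel_ZG) (rule sub)
  have "a_k (ZG n) k = card (gen_inv_sets (ZG n) k)"
    unfolding a_k_def ir by (rule quot_Id_card)
  also have "gen_inv_sets (ZG n) k = {S \<in> GenF n. card S = k}"
    unfolding gis_char[OF n] GenF_def by auto
  finally show ?thesis .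
qed


lemma monom_sum_const: "(\<Sum>S\<in>A. monom (1::int) k) = monom (int (card A)) k"
proof -
  have "(\<Sum>S\<in>A. monom (1::int) k) = of_nat (card A) * monom 1 k" by simp
  also have "\<dots> = monom (int (card A)) k"
    by (simp add: of_nat_poly mult_monom monom_0[symmetric])
  finally show ?thesis .
qed

lemma card_le_GenF: "S \<in> GenF n \<Longrightarrow> card S \<le> n - 1"
proof -
  assume "S \<in> GenF n"
  hence "S \<subseteq> {1..<int n}" unfolding GenF_def IC_def by auto
  hence "card S \<le> card {1..<int n}" by (rule card_mono[rotated]) simp
  thus ?thesis by simp
qed

lemma Psi_GenF:
  assumes n: "n \<ge> 1"
  shows "Psi (ZG n) = Pc (GenF n) - (if n = 1 then 1 else 0)"
proof -
  have cardc: "card (carrier (ZG n)) = n" using n by (simp add: carrier_integer_mod_group)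
  have finG: "finite (GenF n)" unfolding GenF_def using IC_fin by simp
  have "Pc (GenF n) = (\<Sum>k\<in>{0..n-1}. \<Sum>S\<in>{S \<in> GenF n. card S = k}. monom 1 (card S))"
    unfolding Pc_def
    by (rule sum.group[symmetric, OF finG]) (use card_le_GenF in auto)
  also have "\<dots> = (\<Sum>k\<in>{0..n-1}. monom (int (card {S \<in> GenF n. card S = k})) k)"
  proof (rule sum.cong[OF refl])
    fix k
    have "(\<Sum>S\<in>{S \<in> GenF n. card S = k}. monom 1 (card S)) = (\<Sum>S\<in>{S \<in> GenF n. card S = k}. monom (1::int) k)"
      by (rule sum.cong) auto
    thus "(\<Sum>S\<in>{S \<in> GenF n. card S = k}. monom 1 (card S)) = monom (int (card {S \<in> GenF n. card S = k})) k"
      by (simp only: monom_sum_const)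
  qed
  finally have A: "Pc (GenF n) = (\<Sum>k\<in>{0..n-1}. monom (int (card {S \<in> GenF n. card S = k})) k)" .
  have B: "{0..n-1} = insert 0 {1..n-1}" by auto
  have C: "(\<Sum>k\<in>insert 0 {1..n-1}. monom (int (card {S \<in> GenF n. card S = k})) k)
      = monom (int (card {S \<in> GenF n. card S = 0})) 0 + (\<Sum>k\<in>{1..n-1}. monom (int (card {S \<in> GenF n. card S = k})) k)"
    by (rule sum.insert) auto
  have D: "{S \<in> GenF n. card S = 0} = (if n = 1 then {{}} else {})"
  proof -
    have "\<And>S. S \<in> GenF n \<Longrightarrow> finite S" unfolding GenF_def using IC_elem_fin by auto
    hence "{S \<in> GenF n. card S = 0} = {S \<in> GenF n. S = {}}" by auto
    also have "\<dots> = (if n = 1 then {{}} else {})"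
      unfolding GenF_def IC_def by auto
    finally show ?thesis .
  qed
  have D2: "monom (int (card {S \<in> GenF n. card S = 0})) 0 = (if n = 1 then 1 else 0)"
    unfolding D by simp
  have E: "(\<Sum>k\<in>{1..n-1}. monom (int (card {S \<in> GenF n. card S = k})) k) = Psi (ZG n)"
    unfolding Psi_def cardc by (simp add: a_k_ZG[OF n])
  show ?thesis unfolding A B C D2 E by simp
qed

lemma Pc_GenF_mob:
  assumes n: "n \<ge> 1"
  shows "Pc (GenF n) = (\<Sum>d | d dvd n. of_int (moebius_mu (n div d)) * Fm d)"
proof (rule mobius_inversion)
  fix m :: nat assume "m > 0"
  hence "m \<ge> 1" by simp
  thus "Fm m = (\<Sum>d | d dvd m. Pc (GenF d))" using IC_formula[of m] IC_decomp[of m] by simp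
qed (use n in simp)

lemma delta_mob:
  assumes n: "n \<ge> 1"
  shows "(if n = 1 then 1 else 0 :: int poly) = (\<Sum>d | d dvd n. of_int (moebius_mu (n div d)) * 1)"
proof (rule mobius_inversion[where f = "\<lambda>d. if d = 1 then 1 else 0"])
  fix m :: nat assume m: "m > 0"
  have "(\<Sum>d | d dvd m. (if d = 1 then 1 else 0 :: int poly)) = 1"
    using m by (simp add: sum.delta)
  thus "(1::int poly) = (\<Sum>d | d dvd m. if d = 1 then 1 else 0)" by simp
qed (use n in simp)

lemma pow_eval: "d > 0 \<Longrightarrow> (2::int) ^ ((d - 1) div 2) * 2 ^ nat ((1 + (-1) ^ d) div 2) = 2 ^ (d div 2)"
proof (cases "even d")
  case True
  assume "d > 0"
  then obtain j where j: "d = 2 * j" "j > 0" using True by (auto elim!: evenE)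
  have "(2::int) ^ ((d - 1) div 2) * 2 ^ nat ((1 + (-1) ^ d) div 2) = 2 ^ (j - 1) * 2" using j True by simp
  also have "\<dots> = 2 ^ j" using j by (cases j) simp_all
  finally show ?thesis using j by simp
next
  case False
  then obtain j where j: "d = 2 * j + 1" by (auto elim!: oddE)
  thus ?thesis using False by simp
qed

theorem corollary3p2:
  fixes n :: nat
  assumes "n \<ge> 1"
  shows "Psi (integer_mod_group n) =
           (\<Sum>d | d dvd n. smult (moebius_mu (n div d))
              ([:1, 0, 1:] ^ ((d - 1) div 2) * [:1, 1:] ^ nat ((1 + (-1) ^ d) div 2) - 1))
       \<and> E_count (integer_mod_group n) = poly (Psi (integer_mod_group n)) 1
       \<and> E_count (integer_mod_group n) =
           (\<Sum>d | d dvd n. moebius_mu (n div d) * (2 ^ (d div 2) - 1))"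
proof -
  have sm: "\<And>c p. smult c p = of_int c * (p :: int poly)" by (simp add: of_int_poly)
  have P: "Psi (integer_mod_group n) =
           (\<Sum>d | d dvd n. smult (moebius_mu (n div d))
              ([:1, 0, 1:] ^ ((d - 1) div 2) * [:1, 1:] ^ nat ((1 + (-1) ^ d) div 2) - 1))"
  proof -
    have "Psi (ZG n) = (\<Sum>d | d dvd n. of_int (moebius_mu (n div d)) * Fm d)
        - (\<Sum>d | d dvd n. of_int (moebius_mu (n div d)) * 1)"
      using Psi_GenF[OF assms] Pc_GenF_mob[OF assms] delta_mob[OF assms] by simp
    also have "\<dots> = (\<Sum>d | d dvd n. of_int (moebius_mu (n div d)) * (Fm d - 1))"
      by (simp add: sum_subtractf right_diff_distrib)
    also have "\<dots> = (\<Sum>d | d dvd n. smult (moebius_mu (n div d)) (Fm d - 1))"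
      by (simp add: sm)
    finally show ?thesis unfolding Fm_def .
  qed
  have E: "E_count (integer_mod_group n) = poly (Psi (integer_mod_group n)) 1"
    unfolding E_count_def ..
  have "poly (Psi (integer_mod_group n)) 1 = (\<Sum>d | d dvd n. moebius_mu (n div d) * (2 ^ (d div 2) - 1))"
    unfolding P poly_sum
  proof (rule sum.cong[OF refl])
    fix d assume "d \<in> {d. d dvd n}"
    hence d0: "d > 0" using assms by (auto intro: Nat.gr0I)
    show "poly (smult (moebius_mu (n div d)) ([:1, 0, 1:] ^ ((d - 1) div 2) * [:1, 1:] ^ nat ((1 + (-1) ^ d) div 2) - 1)) 1
        = moebius_mu (n div d) * (2 ^ (d div 2) - 1)"
      using pow_eval[OF d0] by simp
  qed
  thus ?thesis using P E by simp
qed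


end
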